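(* Let $K$ be a field with $\operatorname{char}(K)\neq2$. There is a functor $\mathcal{C}\colon\mathbf{BX}(\mathbf{LeibAlg}_K)\to\mathbf{BICat}(\mathbf{LeibAlg}_K)$ which sends a braided crossed module $\mathcal{X}=(M,N,(\cdot_1,\cdot_2),\partial,(\{-,-\},\langle-,-\rangle))$ to $\mathcal{C}_{\mathcal{X}}=(M\rtimes N,N,\bar s,\bar t,\bar e,\bar k,(\bar\tau,\bar\psi))$ with $\bar s(m,n)=n$, $\bar t(m,n)=\partial m+n$, $\bar e(n)=(0,n)$, $\bar k((m,n),(m',\partial m+n))=(m+m',n)$, $\bar\tau_{n,n'}=(-2\{n,n'\},[n,n'])$, $\bar\psi_{n,n'}=(-2\langle n,n'\rangle,[n,n'])$, and sends a homomorphism of braided crossed modules $(f_1,f_2)\colon\mathcal{X}\to\mathcal{X}'$ to $(f_1\times f_2,f_2)\colon\mathcal{C}_{\mathcal{X}}\to\mathcal{C}_{\mathcal{X}'}$, which is a braided internal functor.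
   Context: A Leibniz $K$-algebra: bilinear bracket with $[x,[y,z]]=[[x,y],z]-[[x,z],y]$. Leibniz action of $N$ on $M$: bilinear $\cdot_1\colon N\times M\to M$, $\cdot_2\colon M\times N\to M$ with $n\cdot_1[m,m']=[n\cdot_1m,m']-[n\cdot_1m',m]$; $[m,n\cdot_1m']=[m\cdot_2n,m']-[m,m']\cdot_2n$; $[m,m'\cdot_2n]=[m,m']\cdot_2n-[m\cdot_2n,m']$; $m\cdot_2[n,n']=(m\cdot_2n)\cdot_2n'-(m\cdot_2n')\cdot_2n$; $n\cdot_1(m\cdot_2n')=(n\cdot_1m)\cdot_2n'-[n,n']\cdot_1m$; $n\cdot_1(n'\cdot_1m)=[n,n']\cdot_1m-(n\cdot_1m)\cdot_2n'$. Semidirect product $M\rtimes N$: $M\times N$ with $[(m,n),(m',n')]=([m,m']+n\cdot_1m'+m\cdot_2n',[n,n'])$. Crossed module $(M,N,(\cdot_1,\cdot_2),\partial)$: action plus Leibniz homomorphism $\partial$ with $\partial(n\cdot_1m)=[n,\partial m]$, $\partial(m\cdot_2n)=[\partial m,n]$, $\partial(m)\cdot_1m'=[m,m']=m\cdot_2\partial(m')$. Braiding: bilinear $\{-,-\},\langle-,-\rangle\colon N\times N\to M$ with $\partial\{n,n'\}=[n,n']=\partial\langle n,n'\rangle$; $\{\partial m,\partial m'\}=[m,m']=\langle\partial m,\partial m'\rangle$; $\{\partial m,n\}=m\cdot_2n=\langle\partial m,n\rangle$; $\{n,\partial m\}=n\cdot_1m=\langle n,\partial m\rangle$; $\{n,[n',n'']\}=\{[n,n'],n''\}-\{[n,n''],n'\}$;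 $\langle n,[n',n'']\rangle=\{[n,n'],n''\}-\langle[n,n''],n'\rangle$; $\{n,[n',n'']\}=\{[n,n'],n''\}-\langle[n,n''],n'\rangle$; $\langle n,[n',n'']\rangle=\langle[n,n'],n''\rangle-\langle[n,n''],n'\rangle$. Homomorphism of braided crossed modules $(f_1,f_2)$: Leibniz homomorphisms $f_1\colon M\to M'$, $f_2\colon N\to N'$ with $f_1(n\cdot_1m)=f_2(n)*_1f_1(m)$, $f_1(m\cdot_2n)=f_1(m)*_2f_2(n)$, $\partial'f_1=f_2\partial$, $f_1\{n,n'\}=\{f_2n,f_2n'\}'$, $f_1\langle n,n'\rangle=\langle f_2n,f_2n'\rangle'$. These form $\mathbf{BX}(\mathbf{LeibAlg}_K)$. Categorical Leibniz algebra $(C_1,C_0,s,t,e,k)$: Leibniz homomorphisms $s,t\colon C_1\to C_0$, $e\colon C_0\to C_1$, $k\colon \{(x,y):t(x)=s(y)\}\to C_1$ forming an internal category ($se=te=\mathrm{Id}$, $sk(x,y)=s(x)$, $tk(x,y)=t(y)$, $k(es(x),x)=x=k(x,et(x))$, $k$ associative). Braiding: bilinear $\tau,\psi\colon C_0\times C_0\to C_1$ with $s(\tau_{a,b})=s(\psi_{a,b})=[a,b]$, $t(\tau_{a,b})=t(\psi_{a,b})=-[a,b]$; $k([x,y],\tau_{t x,t y})=k(\tau_{s x,s y},-[x,y])$ and likewise for $\psi$; $\tau_{a,[b,c]}=\tau_{[a,b],c}-\tau_{[a,c],b}$; $\psi_{a,[b,c]}=\tau_{[a,b],c}-\psi_{[a,c],b}$;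 $\tau_{a,[b,c]}=\tau_{[a,b],c}-\psi_{[a,c],b}$; $\psi_{a,[b,c]}=\psi_{[a,b],c}-\psi_{[a,c],b}$. Braided internal functor $(F_1,F_0)$: Leibniz homomorphisms commuting with $s,t,e,k$, with $F_1(\tau_{a,b})=\tau'_{F_0a,F_0b}$, $F_1(\psi_{a,b})=\psi'_{F_0a,F_0b}$. These form $\mathbf{BICat}(\mathbf{LeibAlg}_K)$. *)

theory Defs
  imports Complex_Main "HOL-Library.Product_Plus"
begin

(* K is a type 'k::field; a K-vector space is a type of class ab_group_add
   together with a scalar multiplication satisfying the vector_space axioms. *)

definition bilinear_map ::
  "('k::field \<Rightarrow> 'a::ab_group_add \<Rightarrow> 'a) \<Rightarrow> ('k \<Rightarrow> 'b::ab_group_add \<Rightarrow> 'b)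
   \<Rightarrow> ('k \<Rightarrow> 'c::ab_group_add \<Rightarrow> 'c) \<Rightarrow> ('a \<Rightarrow> 'b \<Rightarrow> 'c) \<Rightarrow> bool" where
  "bilinear_map sa sb sc f \<longleftrightarrow>
     (\<forall>y. Vector_Spaces.linear sa sc (\<lambda>x. f x y)) \<and> (\<forall>x. Vector_Spaces.linear sb sc (f x))"

definition leibniz_alg :: "('k::field \<Rightarrow> 'a::ab_group_add \<Rightarrow> 'a) \<Rightarrow> ('a \<Rightarrow> 'a \<Rightarrow> 'a) \<Rightarrow> bool" where
  "leibniz_alg sc br \<longleftrightarrow> vector_space sc \<and> bilinear_map sc sc sc br \<and>
     (\<forall>x y z. br x (br y z) = br (br x y) z - br (br x z) y)"

definition leibniz_hom ::
  "('k::field \<Rightarrow> 'a::ab_group_add \<Rightarrow> 'a) \<Rightarrow> ('a \<Rightarrow> 'a \<Rightarrow> 'a)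
   \<Rightarrow> ('k \<Rightarrow> 'b::ab_group_add \<Rightarrow> 'b) \<Rightarrow> ('b \<Rightarrow> 'b \<Rightarrow> 'b) \<Rightarrow> ('a \<Rightarrow> 'b) \<Rightarrow> bool" where
  "leibniz_hom sa bra sb brb f \<longleftrightarrow> leibniz_alg sa bra \<and> leibniz_alg sb brb \<and>
     Vector_Spaces.linear sa sb f \<and> (\<forall>x y. f (bra x y) = brb (f x) (f y))"

record ('k, 'm, 'n) bxm =
  scM :: "'k \<Rightarrow> 'm \<Rightarrow> 'm"
  brM :: "'m \<Rightarrow> 'm \<Rightarrow> 'm"
  scN :: "'k \<Rightarrow> 'n \<Rightarrow> 'n"
  brN :: "'n \<Rightarrow> 'n \<Rightarrow> 'n"
  act1 :: "'n \<Rightarrow> 'm \<Rightarrow> 'm"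
  act2 :: "'m \<Rightarrow> 'n \<Rightarrow> 'm"
  bd :: "'m \<Rightarrow> 'n"
  curly :: "'n \<Rightarrow> 'n \<Rightarrow> 'm"
  angle :: "'n \<Rightarrow> 'n \<Rightarrow> 'm"

definition leib_action :: "('k::field, 'm::ab_group_add, 'n::ab_group_add, 'z) bxm_scheme \<Rightarrow> bool" where
  "leib_action X \<longleftrightarrow>
     leibniz_alg (scM X) (brM X) \<and> leibniz_alg (scN X) (brN X) \<and>
     bilinear_map (scN X) (scM X) (scM X) (act1 X) \<and>
     bilinear_map (scM X) (scN X) (scM X) (act2 X) \<and>
     (\<forall>n m m'. act1 X n (brM X m m') = brM X (act1 X n m) m' - brM X (act1 X n m') m) \<and>
     (\<forall>m n m'. brM X m (act1 X n m') = brM X (act2 X m n) m' - act2 X (brM X m m') n) \<and>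
     (\<forall>m m' n. brM X m (act2 X m' n) = act2 X (brM X m m') n - brM X (act2 X m n) m') \<and>
     (\<forall>m n n'. act2 X m (brN X n n') = act2 X (act2 X m n) n' - act2 X (act2 X m n') n) \<and>
     (\<forall>n m n'. act1 X n (act2 X m n') = act2 X (act1 X n m) n' - act1 X (brN X n n') m) \<and>
     (\<forall>n n' m. act1 X n (act1 X n' m) = act1 X (brN X n n') m - act2 X (act1 X n m) n')"

definition crossed_module :: "('k::field, 'm::ab_group_add, 'n::ab_group_add, 'z) bxm_scheme \<Rightarrow> bool" where
  "crossed_module X \<longleftrightarrow> leib_action X \<and>
     leibniz_hom (scM X) (brM X) (scN X) (brN X) (bd X) \<and>
     (\<forall>n m. bd X (act1 X n m) = brN X n (bd X m)) \<and>
     (\<forall>m n. bd X (act2 X m n) = brN X (bd X m) n) \<and>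
     (\<forall>m m'. act1 X (bd X m) m' = brM X m m' \<and> brM X m m' = act2 X m (bd X m'))"

definition braided_xmod :: "('k::field, 'm::ab_group_add, 'n::ab_group_add, 'z) bxm_scheme \<Rightarrow> bool" where
  "braided_xmod X \<longleftrightarrow> crossed_module X \<and>
     bilinear_map (scN X) (scN X) (scM X) (curly X) \<and>
     bilinear_map (scN X) (scN X) (scM X) (angle X) \<and>
     (\<forall>n n'. bd X (curly X n n') = brN X n n' \<and> brN X n n' = bd X (angle X n n')) \<and>
     (\<forall>m m'. curly X (bd X m) (bd X m') = brM X m m' \<and> brM X m m' = angle X (bd X m) (bd X m')) \<and>
     (\<forall>m n. curly X (bd X m) n = act2 X m n \<and> act2 X m n = angle X (bd X m) n) \<and>
     (\<forall>n m. curly X n (bd X m) = act1 X n m \<and> act1 X n m = angle X n (bd X m)) \<and>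
     (\<forall>n n' n''. curly X n (brN X n' n'') = curly X (brN X n n') n'' - curly X (brN X n n'') n') \<and>
     (\<forall>n n' n''. angle X n (brN X n' n'') = curly X (brN X n n') n'' - angle X (brN X n n'') n') \<and>
     (\<forall>n n' n''. curly X n (brN X n' n'') = curly X (brN X n n') n'' - angle X (brN X n n'') n') \<and>
     (\<forall>n n' n''. angle X n (brN X n' n'') = angle X (brN X n n') n'' - angle X (brN X n n'') n')"

definition bxm_hom ::
  "('k::field, 'm::ab_group_add, 'n::ab_group_add, 'z) bxm_scheme
   \<Rightarrow> ('k, 'm2::ab_group_add, 'n2::ab_group_add, 'z2) bxm_scheme
   \<Rightarrow> ('m \<Rightarrow> 'm2) \<Rightarrow> ('n \<Rightarrow> 'n2) \<Rightarrow> bool" where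
  "bxm_hom X X' f1 f2 \<longleftrightarrow> braided_xmod X \<and> braided_xmod X' \<and>
     leibniz_hom (scM X) (brM X) (scM X') (brM X') f1 \<and>
     leibniz_hom (scN X) (brN X) (scN X') (brN X') f2 \<and>
     (\<forall>n m. f1 (act1 X n m) = act1 X' (f2 n) (f1 m)) \<and>
     (\<forall>m n. f1 (act2 X m n) = act2 X' (f1 m) (f2 n)) \<and>
     (\<forall>m. bd X' (f1 m) = f2 (bd X m)) \<and>
     (\<forall>n n'. f1 (curly X n n') = curly X' (f2 n) (f2 n')) \<and>
     (\<forall>n n'. f1 (angle X n n') = angle X' (f2 n) (f2 n'))"

(* Categorical Leibniz algebra data.  The composition cmp is a total function,
   but all its axioms are only imposed on composable pairs (t x = s y). *)
record ('k, 'c1, 'c0) bicat =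
  sc1 :: "'k \<Rightarrow> 'c1 \<Rightarrow> 'c1"
  br1 :: "'c1 \<Rightarrow> 'c1 \<Rightarrow> 'c1"
  sc0 :: "'k \<Rightarrow> 'c0 \<Rightarrow> 'c0"
  br0 :: "'c0 \<Rightarrow> 'c0 \<Rightarrow> 'c0"
  src :: "'c1 \<Rightarrow> 'c0"
  tgt :: "'c1 \<Rightarrow> 'c0"
  ide :: "'c0 \<Rightarrow> 'c1"
  cmp :: "'c1 \<Rightarrow> 'c1 \<Rightarrow> 'c1"
  tau :: "'c0 \<Rightarrow> 'c0 \<Rightarrow> 'c1"
  psi :: "'c0 \<Rightarrow> 'c0 \<Rightarrow> 'c1"

definition cat_leib :: "('k::field, 'c1::ab_group_add, 'c0::ab_group_add, 'z) bicat_scheme \<Rightarrow> bool" where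
  "cat_leib C \<longleftrightarrow>
     leibniz_alg (sc1 C) (br1 C) \<and> leibniz_alg (sc0 C) (br0 C) \<and>
     leibniz_hom (sc1 C) (br1 C) (sc0 C) (br0 C) (src C) \<and>
     leibniz_hom (sc1 C) (br1 C) (sc0 C) (br0 C) (tgt C) \<and>
     leibniz_hom (sc0 C) (br0 C) (sc1 C) (br1 C) (ide C) \<and>
     \<comment> \<open>k is a Leibniz homomorphism on the pullback {(x,y). t x = s y}\<close>
     (\<forall>x y x' y'. tgt C x = src C y \<longrightarrow> tgt C x' = src C y' \<longrightarrow>
        cmp C (x + x') (y + y') = cmp C x y + cmp C x' y' \<and>
        cmp C (br1 C x x') (br1 C y y') = br1 C (cmp C x y) (cmp C x' y')) \<and>
     (\<forall>c x y. tgt C x = src C y \<longrightarrow> cmp C (sc1 C c x) (sc1 C c y) = sc1 C c (cmp C x y)) \<and>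
     \<comment> \<open>internal category axioms\<close>
     (\<forall>a. src C (ide C a) = a \<and> tgt C (ide C a) = a) \<and>
     (\<forall>x y. tgt C x = src C y \<longrightarrow> src C (cmp C x y) = src C x \<and> tgt C (cmp C x y) = tgt C y) \<and>
     (\<forall>x. cmp C (ide C (src C x)) x = x \<and> cmp C x (ide C (tgt C x)) = x) \<and>
     (\<forall>x y z. tgt C x = src C y \<longrightarrow> tgt C y = src C z \<longrightarrow>
        cmp C (cmp C x y) z = cmp C x (cmp C y z))"

definition braided_cat :: "('k::field, 'c1::ab_group_add, 'c0::ab_group_add, 'z) bicat_scheme \<Rightarrow> bool" where
  "braided_cat C \<longleftrightarrow> cat_leib C \<and>
     bilinear_map (sc0 C) (sc0 C) (sc1 C) (tau C) \<and>
     bilinear_map (sc0 C) (sc0 C) (sc1 C) (psi C) \<and>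
     (\<forall>a b. src C (tau C a b) = br0 C a b \<and> src C (psi C a b) = br0 C a b \<and>
            tgt C (tau C a b) = - br0 C a b \<and> tgt C (psi C a b) = - br0 C a b) \<and>
     (\<forall>x y. cmp C (br1 C x y) (tau C (tgt C x) (tgt C y)) = cmp C (tau C (src C x) (src C y)) (- br1 C x y)) \<and>
     (\<forall>x y. cmp C (br1 C x y) (psi C (tgt C x) (tgt C y)) = cmp C (psi C (src C x) (src C y)) (- br1 C x y)) \<and>
     (\<forall>a b c. tau C a (br0 C b c) = tau C (br0 C a b) c - tau C (br0 C a c) b) \<and>
     (\<forall>a b c. psi C a (br0 C b c) = tau C (br0 C a b) c - psi C (br0 C a c) b) \<and>
     (\<forall>a b c. tau C a (br0 C b c) = tau C (br0 C a b) c - psi C (br0 C a c) b) \<and>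
     (\<forall>a b c. psi C a (br0 C b c) = psi C (br0 C a b) c - psi C (br0 C a c) b)"

definition braided_functor ::
  "('k::field, 'c1::ab_group_add, 'c0::ab_group_add, 'z) bicat_scheme
   \<Rightarrow> ('k, 'd1::ab_group_add, 'd0::ab_group_add, 'z2) bicat_scheme
   \<Rightarrow> ('c1 \<Rightarrow> 'd1) \<Rightarrow> ('c0 \<Rightarrow> 'd0) \<Rightarrow> bool" where
  "braided_functor C C' F1 F0 \<longleftrightarrow> braided_cat C \<and> braided_cat C' \<and>
     leibniz_hom (sc1 C) (br1 C) (sc1 C') (br1 C') F1 \<and>
     leibniz_hom (sc0 C) (br0 C) (sc0 C') (br0 C') F0 \<and>
     (\<forall>x. src C' (F1 x) = F0 (src C x) \<and> tgt C' (F1 x) = F0 (tgt C x)) \<and>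
     (\<forall>a. F1 (ide C a) = ide C' (F0 a)) \<and>
     (\<forall>x y. tgt C x = src C y \<longrightarrow> F1 (cmp C x y) = cmp C' (F1 x) (F1 y)) \<and>
     (\<forall>a b. F1 (tau C a b) = tau C' (F0 a) (F0 b) \<and> F1 (psi C a b) = psi C' (F0 a) (F0 b))"

definition CX :: "('k::field, 'm::ab_group_add, 'n::ab_group_add) bxm \<Rightarrow> ('k, 'm \<times> 'n, 'n) bicat" where
  "CX X = \<lparr>
     sc1 = (\<lambda>c (m, n). (scM X c m, scN X c n)),
     br1 = (\<lambda>(m, n) (m', n'). (brM X m m' + act1 X n m' + act2 X m n', brN X n n')),
     sc0 = scN X,
     br0 = brN X,
     src = (\<lambda>(m, n). n),
     tgt = (\<lambda>(m, n). bd X m + n),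
     ide = (\<lambda>n. (0, n)),
     cmp = (\<lambda>(m, n) (m', n'). (m + m', n)),
     tau = (\<lambda>n n'. (scM X (-2) (curly X n n'), brN X n n')),
     psi = (\<lambda>n n'. (scM X (-2) (angle X n n'), brN X n n')) \<rparr>"

end

theory Submission
  imports Defs
begin


lemma lin:
  assumes "Vector_Spaces.linear s1 s2 f"
  shows "vector_space s1" "vector_space s2" "f (x + y) = f x + f y" "f (s1 c x) = s2 c (f x)"
    "f 0 = 0" "f (- x) = - f x" "f (x - y) = f x - f y"
proof -
  have h: "module_hom s1 s2 f" using assms by (simp add: module_hom_iff_linear)
  show "vector_space s1" "vector_space s2" "f (x + y) = f x + f y" "f (s1 c x) = s2 c (f x)"
    using assms by (auto simp: Vector_Spaces.linear_iff)
  show "f 0 = 0" "f (- x) = - f x" "f (x - y) = f x - f y"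
    using h module_hom.zero module_hom.neg module_hom.diff by blast+
qed

lemma bil:
  assumes "bilinear_map sa sb sc f"
  shows "f (x + x') y = f x y + f x' y" "f x (y + y') = f x y + f x y'"
    "f (sa c x) y = sc c (f x y)" "f x (sb c y) = sc c (f x y)"
    "f 0 y = 0" "f x 0 = 0" "f (- x) y = - f x y" "f x (- y) = - f x y"
    "f (x - x') y = f x y - f x' y" "f x (y - y') = f x y - f x y'"
proof -
  have L1: "Vector_Spaces.linear sa sc (\<lambda>x. f x y)" and L2: "Vector_Spaces.linear sb sc (f x)"
    using assms unfolding bilinear_map_def by blast+
  show "f (x + x') y = f x y + f x' y" using lin(3)[OF L1, of x x'] by simp
  show "f (sa c x) y = sc c (f x y)" using lin(4)[OF L1, of c x] by simp
  show "f 0 y = 0" using lin(5)[OF L1] by simp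
  show "f (- x) y = - f x y" using lin(6)[OF L1, of x] by simp
  show "f (x - x') y = f x y - f x' y" using lin(7)[OF L1, of x x'] by simp
  show "f x (y + y') = f x y + f x y'" using lin(3)[OF L2, of y y'] by simp
  show "f x (sb c y) = sc c (f x y)" using lin(4)[OF L2, of c y] by simp
  show "f x 0 = 0" using lin(5)[OF L2] by simp
  show "f x (- y) = - f x y" using lin(6)[OF L2, of y] by simp
  show "f x (y - y') = f x y - f x y'" using lin(7)[OF L2, of y y'] by simp
qed

lemma vs:
  assumes "vector_space s"
  shows "s c 0 = 0" "s c (- x) = - s c x" "s c (x + y) = s c x + s c y" "s c (x - y) = s c x - s c y"
    "s (-2) x = - (x + x)" "s c (s d x) = s d (s c x)"
proof -
  have m: "module s" using assms by (simp add: module_iff_vector_space)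
  show "s c 0 = 0" "s c (- x) = - s c x" "s c (x + y) = s c x + s c y" "s c (x - y) = s c x - s c y"
    using module.scale_zero_right[OF m] module.scale_minus_right[OF m]
      module.scale_right_distrib[OF m] module.scale_right_diff_distrib[OF m] by auto
  have "s (-2) x = - s 2 x" using module.scale_minus_left[OF m, of 2 x] by simp
  also have "s 2 x = x + x"
  proof -
    have "s 2 x = s (1 + 1) x" by simp
    also have "\<dots> = s 1 x + s 1 x" by (rule module.scale_left_distrib[OF m])
    also have "\<dots> = x + x" by (simp add: module.scale_one[OF m])
    finally show ?thesis .
  qed
  finally show "s (-2) x = - (x + x)" .
  show "s c (s d x) = s d (s c x)" using module.scale_scale[OF m] by (simp add: mult.commute)
qed


lemma CX_simps:
  "sc1 (CX X) c x = (scM X c (fst x), scN X c (snd x))"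
  "br1 (CX X) x y = (brM X (fst x) (fst y) + act1 X (snd x) (fst y) + act2 X (fst x) (snd y), brN X (snd x) (snd y))"
  "sc0 (CX X) = scN X" "br0 (CX X) = brN X"
  "src (CX X) x = snd x" "tgt (CX X) x = bd X (fst x) + snd x"
  "ide (CX X) n = (0, n)" "cmp (CX X) x y = (fst x + fst y, snd x)"
  "tau (CX X) a b = (scM X (-2) (curly X a b), brN X a b)"
  "psi (CX X) a b = (scM X (-2) (angle X a b), brN X a b)"
  by (simp_all add: CX_def split_def)

lemma part1:
  fixes X :: "('k::field, 'm::ab_group_add, 'n::ab_group_add) bxm"
  assumes B: "braided_xmod X"
  shows "braided_cat (CX X)"
proof -
  have XM: "crossed_module X" and LA: "leib_action X" using B by (auto simp: braided_xmod_def crossed_module_def)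
  have LM: "leibniz_alg (scM X) (brM X)" and LN: "leibniz_alg (scN X) (brN X)"
    and A1: "bilinear_map (scN X) (scM X) (scM X) (act1 X)"
    and A2: "bilinear_map (scM X) (scN X) (scM X) (act2 X)"
    and ax1: "\<And>n m m'. act1 X n (brM X m m') = brM X (act1 X n m) m' - brM X (act1 X n m') m"
    and ax2: "\<And>m n m'. brM X m (act1 X n m') = brM X (act2 X m n) m' - act2 X (brM X m m') n"
    and ax3: "\<And>m m' n. brM X m (act2 X m' n) = act2 X (brM X m m') n - brM X (act2 X m n) m'"
    and ax4: "\<And>m n n'. act2 X m (brN X n n') = act2 X (act2 X m n) n' - act2 X (act2 X m n') n"
    and ax5: "\<And>n m n'. act1 X n (act2 X m n') = act2 X (act1 X n m) n' - act1 X (brN X n n') m"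
    and ax6: "\<And>n n' m. act1 X n (act1 X n' m) = act1 X (brN X n n') m - act2 X (act1 X n m) n'"
    using LA unfolding leib_action_def by blast+
  have VM: "vector_space (scM X)" and BM: "bilinear_map (scM X) (scM X) (scM X) (brM X)"
    and JM: "\<And>x y z. brM X x (brM X y z) = brM X (brM X x y) z - brM X (brM X x z) y"
    using LM unfolding leibniz_alg_def by blast+
  have VN: "vector_space (scN X)" and BN: "bilinear_map (scN X) (scN X) (scN X) (brN X)"
    and JN: "\<And>x y z. brN X x (brN X y z) = brN X (brN X x y) z - brN X (brN X x z) y"
    using LN unfolding leibniz_alg_def by blast+
  have HD: "leibniz_hom (scM X) (brM X) (scN X) (brN X) (bd X)"
    and d1: "\<And>n m. bd X (act1 X n m) = brN X n (bd X m)"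
    and d2: "\<And>m n. bd X (act2 X m n) = brN X (bd X m) n"
    and d3: "\<And>m m'. act1 X (bd X m) m' = brM X m m'"
    and d4: "\<And>m m'. act2 X m (bd X m') = brM X m m'"
    using XM unfolding crossed_module_def by metis+
  have LD: "Vector_Spaces.linear (scM X) (scN X) (bd X)" and dbr: "\<And>x y. bd X (brM X x y) = brN X (bd X x) (bd X y)"
    using HD unfolding leibniz_hom_def by blast+
  have BC: "bilinear_map (scN X) (scN X) (scM X) (curly X)"
    and BA: "bilinear_map (scN X) (scN X) (scM X) (angle X)"
    and b1: "\<And>n n'. bd X (curly X n n') = brN X n n'"
    and b2: "\<And>n n'. bd X (angle X n n') = brN X n n'"
    and b3: "\<And>m n'. curly X (bd X m) n' = act2 X m n'"
    and b4: "\<And>m n'. curly X n' (bd X m) = act1 X n' m"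
    and b5: "\<And>m n'. angle X (bd X m) n' = act2 X m n'"
    and b6: "\<And>m n'. angle X n' (bd X m) = act1 X n' m"
    and b7: "\<And>n n' n''. curly X n (brN X n' n'') = curly X (brN X n n') n'' - curly X (brN X n n'') n'"
    and b8: "\<And>n n' n''. angle X n (brN X n' n'') = curly X (brN X n n') n'' - angle X (brN X n n'') n'"
    and b9: "\<And>n n' n''. curly X n (brN X n' n'') = curly X (brN X n n') n'' - angle X (brN X n n'') n'"
    and b10: "\<And>n n' n''. angle X n (brN X n' n'') = angle X (brN X n n') n'' - angle X (brN X n n'') n'"
    using B unfolding braided_xmod_def by metis+
  note bils = bil[OF BM] bil[OF BN] bil[OF A1] bil[OF A2] bil[OF BC] bil[OF BA]
  note lins = lin[OF LD]
  note vss = vs[OF VM] vs[OF VN]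
  have V1: "vector_space (sc1 (CX X))"
    using VM VN unfolding vector_space_def by (simp add: CX_simps prod_eq_iff)
  have L1b: "bilinear_map (sc1 (CX X)) (sc1 (CX X)) (sc1 (CX X)) (br1 (CX X))"
    unfolding bilinear_map_def Vector_Spaces.linear_iff
    by (auto simp: V1 CX_simps prod_eq_iff bils vss algebra_simps)
  have L1j: "\<forall>x y z. br1 (CX X) x (br1 (CX X) y z) = br1 (CX X) (br1 (CX X) x y) z - br1 (CX X) (br1 (CX X) x z) y"
    by (simp add: CX_simps prod_eq_iff bils JM JN ax1 ax2 ax3 ax4 ax5 ax6 algebra_simps)
  have L1: "leibniz_alg (sc1 (CX X)) (br1 (CX X))"
    unfolding leibniz_alg_def using V1 L1b L1j by blast
  have ca: "\<And>a b c. curly X (brN X a b) c = angle X (brN X a b) c"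
    using b7 b9 by (metis diff_left_imp_eq)
  have LS: "leibniz_hom (sc1 (CX X)) (br1 (CX X)) (sc0 (CX X)) (br0 (CX X)) (src (CX X))"
    unfolding leibniz_hom_def Vector_Spaces.linear_iff
    by (simp add: L1 LN V1 VN CX_simps)
  have LT: "leibniz_hom (sc1 (CX X)) (br1 (CX X)) (sc0 (CX X)) (br0 (CX X)) (tgt (CX X))"
    unfolding leibniz_hom_def Vector_Spaces.linear_iff
    by (simp add: L1 LN V1 VN CX_simps lins vss bils dbr d1 d2 algebra_simps)
  have LI: "leibniz_hom (sc0 (CX X)) (br0 (CX X)) (sc1 (CX X)) (br1 (CX X)) (ide (CX X))"
    unfolding leibniz_hom_def Vector_Spaces.linear_iff
    by (simp add: L1 LN V1 VN CX_simps vss bils)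
  have K1: "\<forall>x y x' y'. tgt (CX X) x = src (CX X) y \<longrightarrow> tgt (CX X) x' = src (CX X) y' \<longrightarrow>
        cmp (CX X) (x + x') (y + y') = cmp (CX X) x y + cmp (CX X) x' y' \<and>
        cmp (CX X) (br1 (CX X) x x') (br1 (CX X) y y') = br1 (CX X) (cmp (CX X) x y) (cmp (CX X) x' y')"
  proof (intro allI impI conjI)
    fix x y x' y' :: "'m \<times> 'n"
    assume t1: "tgt (CX X) x = src (CX X) y" and t2: "tgt (CX X) x' = src (CX X) y'"
    show "cmp (CX X) (x + x') (y + y') = cmp (CX X) x y + cmp (CX X) x' y'"
      by (simp add: CX_simps algebra_simps)
    obtain m n m' n' p q p' q' where xs: "x = (m, n)" "y = (m', n')" "x' = (p, q)" "y' = (p', q')"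
      by (cases x, cases y, cases x', cases y') auto
    have e1: "n' = bd X m + n" and e2: "q' = bd X p + q" using t1 t2 by (simp_all add: xs CX_simps)
    show "cmp (CX X) (br1 (CX X) x x') (br1 (CX X) y y') = br1 (CX X) (cmp (CX X) x y) (cmp (CX X) x' y')"
      by (simp add: xs e1 e2 CX_simps bils d3 d4 algebra_simps)
  qed
  have K2: "\<forall>c x y. tgt (CX X) x = src (CX X) y \<longrightarrow> cmp (CX X) (sc1 (CX X) c x) (sc1 (CX X) c y) = sc1 (CX X) c (cmp (CX X) x y)"
    by (simp add: CX_simps vss)
  have K3: "\<forall>a. src (CX X) (ide (CX X) a) = a \<and> tgt (CX X) (ide (CX X) a) = a"
    by (simp add: CX_simps lins)
  have K4: "\<forall>x y. tgt (CX X) x = src (CX X) y \<longrightarrow> src (CX X) (cmp (CX X) x y) = src (CX X) x \<and> tgt (CX X) (cmp (CX X) x y) = tgt (CX X) y"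
    by (simp add: CX_simps lins algebra_simps)
  have K5: "\<forall>x. cmp (CX X) (ide (CX X) (src (CX X) x)) x = x \<and> cmp (CX X) x (ide (CX X) (tgt (CX X) x)) = x"
    by (simp add: CX_simps)
  have K6: "\<forall>x y z. tgt (CX X) x = src (CX X) y \<longrightarrow> tgt (CX X) y = src (CX X) z \<longrightarrow>
        cmp (CX X) (cmp (CX X) x y) z = cmp (CX X) x (cmp (CX X) y z)"
    by (simp add: CX_simps algebra_simps)
  have CL: "cat_leib (CX X)"
    using L1 LN LS LT LI K1 K2 K3 K4 K5 K6 unfolding cat_leib_def CX_simps(3,4) by blast
  have BT: "bilinear_map (sc0 (CX X)) (sc0 (CX X)) (sc1 (CX X)) (tau (CX X))"
    unfolding bilinear_map_def Vector_Spaces.linear_iff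
    by (simp add: V1 VN CX_simps vss bils)
  have BP: "bilinear_map (sc0 (CX X)) (sc0 (CX X)) (sc1 (CX X)) (psi (CX X))"
    unfolding bilinear_map_def Vector_Spaces.linear_iff
    by (simp add: V1 VN CX_simps vss bils)
  have S1: "\<forall>a b. src (CX X) (tau (CX X) a b) = br0 (CX X) a b \<and> src (CX X) (psi (CX X) a b) = br0 (CX X) a b \<and>
            tgt (CX X) (tau (CX X) a b) = - br0 (CX X) a b \<and> tgt (CX X) (psi (CX X) a b) = - br0 (CX X) a b"
    by (simp add: CX_simps vss lins b1 b2)
  have N1: "\<forall>x y. cmp (CX X) (br1 (CX X) x y) (tau (CX X) (tgt (CX X) x) (tgt (CX X) y)) = cmp (CX X) (tau (CX X) (src (CX X) x) (src (CX X) y)) (- br1 (CX X) x y)"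
    by (simp add: CX_simps vss bils b3 b4 d3 algebra_simps)
  have N2: "\<forall>x y. cmp (CX X) (br1 (CX X) x y) (psi (CX X) (tgt (CX X) x) (tgt (CX X) y)) = cmp (CX X) (psi (CX X) (src (CX X) x) (src (CX X) y)) (- br1 (CX X) x y)"
    by (simp add: CX_simps vss bils b5 b6 d3 algebra_simps)
  have I1: "\<forall>a b c. tau (CX X) a (br0 (CX X) b c) = tau (CX X) (br0 (CX X) a b) c - tau (CX X) (br0 (CX X) a c) b"
    by (simp add: CX_simps vss b7 JN)
  have I2: "\<forall>a b c. psi (CX X) a (br0 (CX X) b c) = tau (CX X) (br0 (CX X) a b) c - psi (CX X) (br0 (CX X) a c) b"
    by (simp add: CX_simps vss b8 JN)
  have I3: "\<forall>a b c. tau (CX X) a (br0 (CX X) b c) = tau (CX X) (br0 (CX X) a b) c - psi (CX X) (br0 (CX X) a c) b"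
    by (simp add: CX_simps vss b9 JN)
  have I4: "\<forall>a b c. psi (CX X) a (br0 (CX X) b c) = psi (CX X) (br0 (CX X) a b) c - psi (CX X) (br0 (CX X) a c) b"
    by (simp add: CX_simps vss b10 JN)
  show ?thesis
    unfolding braided_cat_def using CL BT BP S1 N1 N2 I1 I2 I3 I4 by blast
qed

lemma part2:
  fixes X :: "('k::field, 'm::ab_group_add, 'n::ab_group_add) bxm"
    and X' :: "('k, 'm2::ab_group_add, 'n2::ab_group_add) bxm"
  assumes H: "bxm_hom X X' f1 f2"
  shows "braided_functor (CX X) (CX X') (map_prod f1 f2) f2"
proof -
  have B: "braided_xmod X" and B': "braided_xmod X'"
    and H1: "leibniz_hom (scM X) (brM X) (scM X') (brM X') f1"
    and H2: "leibniz_hom (scN X) (brN X) (scN X') (brN X') f2"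
    and h1: "\<And>n m. f1 (act1 X n m) = act1 X' (f2 n) (f1 m)"
    and h2: "\<And>m n. f1 (act2 X m n) = act2 X' (f1 m) (f2 n)"
    and h3: "\<And>m. bd X' (f1 m) = f2 (bd X m)"
    and h4: "\<And>n n'. f1 (curly X n n') = curly X' (f2 n) (f2 n')"
    and h5: "\<And>n n'. f1 (angle X n n') = angle X' (f2 n) (f2 n')"
    using H unfolding bxm_hom_def by blast+
  have C: "braided_cat (CX X)" and C': "braided_cat (CX X')" using part1 B B' by blast+
  have LC: "leibniz_alg (sc1 (CX X)) (br1 (CX X))" "leibniz_alg (sc1 (CX X')) (br1 (CX X'))"
    using C C' unfolding braided_cat_def cat_leib_def by blast+
  have VC: "vector_space (sc1 (CX X))" "vector_space (sc1 (CX X'))" using LC unfolding leibniz_alg_def by blast+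
  have LN: "leibniz_alg (scN X) (brN X)" "leibniz_alg (scN X') (brN X')" using H2 unfolding leibniz_hom_def by blast+
  have LF1: "Vector_Spaces.linear (scM X) (scM X') f1" and f1b: "\<And>x y. f1 (brM X x y) = brM X' (f1 x) (f1 y)"
    using H1 unfolding leibniz_hom_def by blast+
  have LF2: "Vector_Spaces.linear (scN X) (scN X') f2" and f2b: "\<And>x y. f2 (brN X x y) = brN X' (f2 x) (f2 y)"
    using H2 unfolding leibniz_hom_def by blast+
  have F1: "leibniz_hom (sc1 (CX X)) (br1 (CX X)) (sc1 (CX X')) (br1 (CX X')) (map_prod f1 f2)"
    unfolding leibniz_hom_def Vector_Spaces.linear_iff
    by (simp add: LC VC CX_simps lin[OF LF1] lin[OF LF2] f1b f2b h1 h2)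
  have F2: "leibniz_hom (sc0 (CX X)) (br0 (CX X)) (sc0 (CX X')) (br0 (CX X')) f2"
    using H2 by (simp add: CX_simps)
  have F3: "\<forall>x. src (CX X') (map_prod f1 f2 x) = f2 (src (CX X) x) \<and> tgt (CX X') (map_prod f1 f2 x) = f2 (tgt (CX X) x)"
    by (simp add: CX_simps lin[OF LF2] h3)
  have F4: "\<forall>a. map_prod f1 f2 (ide (CX X) a) = ide (CX X') (f2 a)"
    by (simp add: CX_simps lin[OF LF1])
  have F5: "\<forall>x y. tgt (CX X) x = src (CX X) y \<longrightarrow> map_prod f1 f2 (cmp (CX X) x y) = cmp (CX X') (map_prod f1 f2 x) (map_prod f1 f2 y)"
    by (simp add: CX_simps lin[OF LF1])
  have F6: "\<forall>a b. map_prod f1 f2 (tau (CX X) a b) = tau (CX X') (f2 a) (f2 b) \<and> map_prod f1 f2 (psi (CX X) a b) = psi (CX X') (f2 a) (f2 b)"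
    by (simp add: CX_simps lin[OF LF1] f2b h4 h5)
  show ?thesis
    unfolding braided_functor_def using C C' F1 F2 F3 F4 F5 F6 by blast
qed


theorem mainTheorem3:
  assumes "(2::'k::field) \<noteq> 0"
  shows "(\<forall>X :: ('k, 'm::ab_group_add, 'n::ab_group_add) bxm.
            braided_xmod X \<longrightarrow> braided_cat (CX X))
       \<and> (\<forall>(X :: ('k, 'm, 'n) bxm) (X' :: ('k, 'm2::ab_group_add, 'n2::ab_group_add) bxm) f1 f2.
            bxm_hom X X' f1 f2 \<longrightarrow> braided_functor (CX X) (CX X') (map_prod f1 f2) f2)
       \<and> map_prod (id :: 'm \<Rightarrow> 'm) (id :: 'n \<Rightarrow> 'n) = id
       \<and> (\<forall>(f1 :: 'm \<Rightarrow> 'm2) (f2 :: 'n \<Rightarrow> 'n2) (g1 :: 'm2 \<Rightarrow> 'm3) (g2 :: 'n2 \<Rightarrow> 'n3).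
            map_prod (g1 \<circ> f1) (g2 \<circ> f2) = map_prod g1 g2 \<circ> map_prod f1 f2)"
proof (intro conjI allI impI)
  show "\<And>X :: ('k, 'm, 'n) bxm. braided_xmod X \<Longrightarrow> braided_cat (CX X)" by (rule part1)
  show "\<And>(X :: ('k, 'm, 'n) bxm) (X' :: ('k, 'm2, 'n2) bxm) f1 f2. bxm_hom X X' f1 f2 \<Longrightarrow> braided_functor (CX X) (CX X') (map_prod f1 f2) f2"
    by (rule part2)
  show "map_prod (id :: 'm \<Rightarrow> 'm) (id :: 'n \<Rightarrow> 'n) = id" by (rule map_prod.id)
  show "\<And>(f1 :: 'm \<Rightarrow> 'm2) (f2 :: 'n \<Rightarrow> 'n2) (g1 :: 'm2 \<Rightarrow> 'm3) (g2 :: 'n2 \<Rightarrow> 'n3).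
            map_prod (g1 \<circ> f1) (g2 \<circ> f2) = map_prod g1 g2 \<circ> map_prod f1 f2" by (rule map_prod.comp[symmetric])
qed
end
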